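(* Let $\mathbb{F}$ be a field of characteristic $2$. The voltage assignment $\ell$ on $\widetilde H_3(\mathbb{F})$ is reductive, i.e. for all vertices $u,v,w$ of $\widetilde H_3(\mathbb{F})$ with $u\sim v$ and $v\perp w$ we have $\ell(w,u)=\ell(w,v)$.
   Context: Let $V=\mathbb{F}^4$, $V^*$ its dual. $\widetilde H_3(\mathbb{F})$ is the graph whose vertices are tensors $v\otimes f\in V\otimes V^*$ with $f(v)\neq0$, with $v\otimes f\perp w\otimes g$ iff $f(w)=g(v)=0$; $u\sim v$ means $u,v$ have the same neighbours. Let $W=\bigwedge^2V$, fix an isomorphism $\chi:\bigwedge^4V\to\mathbb{F}$, identify $\bigwedge^2V^*$ with $(\bigwedge^2V)^*$ via $(f_1\wedge f_2)(v_1\wedge v_2)=f_1(v_1)f_2(v_2)-f_1(v_2)f_2(v_1)$, let $\psi:\bigwedge^2V\to\bigwedge^2V^*$ be $\psi(\hat w)(\hat v)=\chi(\hat v\wedge\hat w)$ and $\phi=\psi^{-1}$. $S_2(W)$ is the symmetric square of $W$ (product $ab$). $\ell$ assigns to the dart from $v_1\otimes h_1$ to $v_2\otimes h_2$ the element $h_1(v_1)^{-1}h_2(v_2)^{-1}(v_1\wedge v_2)\,\phi(h_1\wedge h_2)$ of the additive group $S_2(W)$. *)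

theory Defs
  imports "HOL-Analysis.Analysis" "HOL-Library.Numeral_Type"
begin

text \<open>Coordinates: V = F^4 is 'a^4 with standard basis e_0..e_3, V* is 'a^4 with the
dual basis, so f(v) is the sum of the products of coordinates.\<close>

definition dapp :: "'a::field ^ 4 \<Rightarrow> 'a ^ 4 \<Rightarrow> 'a" where
  "dapp f v = (\<Sum>i\<in>UNIV. f $ i * v $ i)"

text \<open>Vertices of the graph: tensors v (x) f with f(v) nonzero, given by a representative (v,f).
Orthogonality (adjacency): f(w) = 0 and g(v) = 0.\<close>

definition is_vertex :: "('a::field ^ 4) \<times> ('a ^ 4) \<Rightarrow> bool" where
  "is_vertex x = (dapp (snd x) (fst x) \<noteq> 0)"

definition perp :: "('a::field ^ 4) \<times> ('a ^ 4) \<Rightarrow> ('a ^ 4) \<times> ('a ^ 4) \<Rightarrow> bool" where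
  "perp x y = (dapp (snd x) (fst y) = 0 \<and> dapp (snd y) (fst x) = 0)"

definition same_nbhd :: "('a::field ^ 4) \<times> ('a ^ 4) \<Rightarrow> ('a ^ 4) \<times> ('a ^ 4) \<Rightarrow> bool" where
  "same_nbhd x y = (\<forall>z. is_vertex z \<longrightarrow> (perp x z \<longleftrightarrow> perp y z))"

text \<open>W = wedge^2 V, in coordinates w.r.t. the basis e_i wedge e_j (i<j); an element is an
alternating function on index pairs (value at (i,j), i<j, is the coordinate).
The same coordinates describe wedge^2 V* w.r.t. the basis e^i wedge e^j, which under the
stated pairing is exactly the dual basis of the e_i wedge e_j.\<close>

definition alt2 :: "(4 \<times> 4 \<Rightarrow> 'a::field) \<Rightarrow> bool" where
  "alt2 a = (\<forall>i j. a (i, j) = - a (j, i) \<and> a (i, i) = 0)"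

definition wedge2 :: "'a::field ^ 4 \<Rightarrow> 'a ^ 4 \<Rightarrow> (4 \<times> 4 \<Rightarrow> 'a)" where
  "wedge2 v w = (\<lambda>(i, j). v $ i * w $ j - v $ j * w $ i)"

definition pair2 :: "(4 \<times> 4 \<Rightarrow> 'a::field) \<Rightarrow> (4 \<times> 4 \<Rightarrow> 'a) \<Rightarrow> 'a" where
  "pair2 \<alpha> a = (\<Sum>p\<in>{(i, j). i < j}. \<alpha> p * a p)"

definition basis4 :: "4 \<Rightarrow> 'a::field ^ 4" where
  "basis4 i = (\<chi> k. if k = i then 1 else 0)"

text \<open>Coefficient of e_0 wedge e_1 wedge e_2 wedge e_3 in a wedge b, for a, b in wedge^2 V.\<close>

definition wedge4 :: "(4 \<times> 4 \<Rightarrow> 'a::field) \<Rightarrow> (4 \<times> 4 \<Rightarrow> 'a) \<Rightarrow> 'a" where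
  "wedge4 a b =
     a (0,1) * b (2,3) - a (0,2) * b (1,3) + a (0,3) * b (1,2)
   + a (1,2) * b (0,3) - a (1,3) * b (0,2) + a (2,3) * b (0,1)"

text \<open>The isomorphism chi : wedge^4 V -> F is determined by the nonzero scalar
c = chi(e_0 wedge e_1 wedge e_2 wedge e_3); psi(w)(v) = chi(v wedge w), written in the
coordinates of wedge^2 V* (dual basis), and phi is the inverse of psi.\<close>

definition psi :: "'a::field \<Rightarrow> (4 \<times> 4 \<Rightarrow> 'a) \<Rightarrow> (4 \<times> 4 \<Rightarrow> 'a)" where
  "psi c w = (\<lambda>(i, j). c * wedge4 (wedge2 (basis4 i) (basis4 j)) w)"

definition phi :: "'a::field \<Rightarrow> (4 \<times> 4 \<Rightarrow> 'a) \<Rightarrow> (4 \<times> 4 \<Rightarrow> 'a)" where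
  "phi c \<alpha> = (THE w. alt2 w \<and> psi c w = \<alpha>)"

text \<open>S_2(W): an element is given by its coordinates w.r.t. the basis {b_p b_q} (p <= q) of
monomials in the basis b_p = e_i wedge e_j of W; we store the coefficient of b_p b_q
symmetrically at (p,q) and (q,p), and 0 off the index set.  This is valid in every
characteristic (in particular characteristic 2).\<close>

definition idx2 :: "(4 \<times> 4) set" where
  "idx2 = {(i, j). i < j}"

definition sprod :: "(4 \<times> 4 \<Rightarrow> 'a::field) \<Rightarrow> (4 \<times> 4 \<Rightarrow> 'a) \<Rightarrow> (4 \<times> 4) \<times> (4 \<times> 4) \<Rightarrow> 'a" where
  "sprod a b = (\<lambda>(p, q). if p \<in> idx2 \<and> q \<in> idx2 then
                   (if p = q then a p * b p else a p * b q + a q * b p) else 0)"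

definition voltage :: "'a::field \<Rightarrow> ('a ^ 4) \<times> ('a ^ 4) \<Rightarrow> ('a ^ 4) \<times> ('a ^ 4)
                        \<Rightarrow> (4 \<times> 4) \<times> (4 \<times> 4) \<Rightarrow> 'a" where
  "voltage c x y = (\<lambda>r. inverse (dapp (snd x) (fst x)) * inverse (dapp (snd y) (fst y)) *
      sprod (wedge2 (fst x) (fst y)) (phi c (wedge2 (snd x) (snd y))) r)"

end

theory Submission
  imports Defs
begin

lemma ex4: "(x::4) = 0 \<or> x = 1 \<or> x = 2 \<or> x = 3"
  using exhaust_4[of x] by auto

lemma psi_vals:
  "psi c w (0,0) = 0" "psi c w (0,1) = c * w (2,3)" "psi c w (0,2) = - c * w (1,3)" "psi c w (0,3) = c * w (1,2)"
  "psi c w (1,0) = - c * w (2,3)" "psi c w (1,1) = 0" "psi c w (1,2) = c * w (0,3)" "psi c w (1,3) = - c * w (0,2)"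
  "psi c w (2,0) = c * w (1,3)" "psi c w (2,1) = - c * w (0,3)" "psi c w (2,2) = 0" "psi c w (2,3) = c * w (0,1)"
  "psi c w (3,0) = - c * w (1,2)" "psi c w (3,1) = c * w (0,2)" "psi c w (3,2) = - c * w (0,1)" "psi c w (3,3) = 0"
  by (simp_all add: psi_def wedge4_def wedge2_def basis4_def)

lemma all4: "(\<forall>i::4. P i) \<longleftrightarrow> P 0 \<and> P 1 \<and> P 2 \<and> P 3"
  by (metis ex4)

lemma alt_psi: "alt2 (psi c w)"
  unfolding alt2_def all4 by (simp only: psi_vals) simp

lemma psi_psi: assumes "alt2 w" shows "psi c (psi d w) = (\<lambda>p. c * d * w p)"
proof -
  have a: "w (i,j) = - w (j,i)" "w (i,i) = 0" for i j using assms unfolding alt2_def by blast+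
  have b: "w (1,0) = - w (0,1)" "w (2,0) = - w (0,2)" "w (3,0) = - w (0,3)"
     "w (2,1) = - w (1,2)" "w (3,1) = - w (1,3)" "w (3,2) = - w (2,3)" by (rule a(1))+
  have "\<forall>i j. psi c (psi d w) (i,j) = c * d * w (i,j)"
    unfolding all4 by (simp only: psi_vals) (simp add: a(2) b)
  then show ?thesis by (auto simp: fun_eq_iff)
qed

lemma psi_smult: "psi c (\<lambda>p. b * a p) = (\<lambda>p. b * psi c a p)"
  by (auto simp: psi_def wedge4_def algebra_simps fun_eq_iff)

lemma phi_eq: assumes "alt2 \<alpha>" "c \<noteq> 0" shows "phi c \<alpha> = psi (inverse c) \<alpha>"
  unfolding phi_def
proof (rule the_equality)
  show "alt2 (psi (inverse c) \<alpha>) \<and> psi c (psi (inverse c) \<alpha>) = \<alpha>"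
    using psi_psi[OF assms(1)] assms(2) by (simp add: alt_psi)
next
  fix w assume "alt2 w \<and> psi c w = \<alpha>"
  then show "w = psi (inverse c) \<alpha>"
    using psi_psi[of w "inverse c" c] assms(2) by auto
qed

lemma alt_wedge2: "alt2 (wedge2 x y)"
  by (auto simp: alt2_def wedge2_def)

lemma wedge2_smult_r: "wedge2 x (a *s y) = (\<lambda>p. a * wedge2 x y p)"
  by (auto simp: wedge2_def fun_eq_iff algebra_simps)

lemma sprod_smult: "sprod (\<lambda>p. a * A p) (\<lambda>p. b * B p) r = a * b * sprod A B r"
  by (cases r) (auto simp: sprod_def algebra_simps)

lemma dapp_smult: "dapp (b *s f) (a *s v) = a * b * dapp f v"
  by (simp add: dapp_def sum_distrib_left algebra_simps)

lemma dapp_comm: "dapp f v = dapp v f"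
  by (simp add: dapp_def mult.commute)

lemma dapp_diff: "dapp f (x - y) = dapp f x - dapp f y"
  by (simp add: dapp_def algebra_simps sum_subtractf)

lemma dapp_scale: "dapp f (a *s x) = a * dapp f x"
  by (simp add: dapp_def sum_distrib_left algebra_simps)

lemma dapp_basis: "dapp f (basis4 i) = f $ i"
  by (simp add: dapp_def basis4_def if_distrib cong: if_cong)

lemma dapp_zero: "dapp f 0 = 0"
  by (simp add: dapp_def)

lemma lemA:
  fixes f v w :: "'a::field ^ 4"
  assumes "dapp f v \<noteq> 0" "w \<noteq> 0" "dapp f w = 0"
  shows "\<exists>g. dapp g v = 0 \<and> dapp g w \<noteq> 0"
proof -
  have "\<exists>i j. v$i * w$j - v$j * w$i \<noteq> 0"
  proof (rule ccontr)
    assume "\<not> ?thesis"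
    then have h: "\<And>i j. v$i * w$j = v$j * w$i" by auto
    have "dapp f v * w$i = dapp f w * v$i" for i
    proof -
      have "dapp f v * w$i = (\<Sum>k\<in>UNIV. f$k * (v$k * w$i))"
        unfolding dapp_def by (simp add: sum_distrib_right mult.assoc)
      also have "\<dots> = (\<Sum>k\<in>UNIV. f$k * (w$k * v$i))" using h by (metis mult.commute)
      also have "\<dots> = dapp f w * v$i"
        unfolding dapp_def by (simp add: sum_distrib_right mult.assoc)
      finally show ?thesis .
    qed
    then have "w$i = 0" for i using assms by simp
    then have "w = 0" by (simp add: vec_eq_iff)
    then show False using assms by simp
  qed
  then obtain i j where ij: "v$i * w$j - v$j * w$i \<noteq> 0" by blast
  then have ne: "i \<noteq> j" by auto
  define g where "g = (\<chi> k. if k = j then v$i else if k = i then - v$j else 0)"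
  have dg: "dapp g x = v$i * x$j - v$j * x$i" for x
  proof -
    have "dapp g x = (\<Sum>k\<in>UNIV. (if k = j then v$i * x$k else 0) + (if k = i then - v$j * x$k else 0))"
      unfolding dapp_def g_def using ne by (intro sum.cong) auto
    also have "\<dots> = v$i * x$j - v$j * x$i"
      by (simp add: sum.distrib)
    finally show ?thesis .
  qed
  have "dapp g v = 0" unfolding dg by (simp add: mult.commute)
  moreover have "dapp g w \<noteq> 0" unfolding dg using ij .
  ultimately show ?thesis by blast
qed

lemma lemB:
  fixes f1 v1 f2 :: "'a::field ^ 4"
  assumes "dapp f1 v1 \<noteq> 0" "\<forall>w. dapp f1 w = 0 \<longrightarrow> dapp f2 w = 0"
  shows "f2 = (dapp f2 v1 / dapp f1 v1) *s f1"
proof -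
  have "f2$i = (dapp f2 v1 / dapp f1 v1) * f1$i" for i
  proof -
    define x where "x = basis4 i - (f1$i / dapp f1 v1) *s v1"
    have "dapp f1 x = 0" using assms(1) by (simp add: x_def dapp_diff dapp_scale dapp_basis)
    then have "dapp f2 x = 0" using assms(2) by blast
    then show ?thesis using assms(1) by (simp add: x_def dapp_diff dapp_scale dapp_basis field_simps)
  qed
  then show ?thesis by (simp add: vec_eq_iff)
qed

theorem lemma3p7:
  fixes c :: "'a::field"
    and u v w :: "('a ^ 4) \<times> ('a ^ 4)"
  assumes "CHAR('a) = 2"
    and "c \<noteq> 0"
    and "is_vertex u" and "is_vertex v" and "is_vertex w"
    and "same_nbhd u v"
    and "perp v w"
  shows "voltage c w u = voltage c w v"
proof -
  obtain v1 f1 where u: "u = (v1, f1)" by fastforce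
  obtain v2 f2 where v: "v = (v2, f2)" by fastforce
  obtain x h where w: "w = (x, h)" by fastforce
  have d1: "dapp f1 v1 \<noteq> 0" using assms(3) u by (simp add: is_vertex_def)
  have d2: "dapp f2 v2 \<noteq> 0" using assms(4) v by (simp add: is_vertex_def)
  have sn: "\<And>z. is_vertex z \<Longrightarrow> perp u z = perp v z" using assms(6) unfolding same_nbhd_def by blast
  have ker: "\<forall>y. dapp f1 y = 0 \<longrightarrow> dapp f2 y = 0"
  proof (intro allI impI)
    fix y assume y: "dapp f1 y = 0"
    show "dapp f2 y = 0"
    proof (cases "y = 0")
      case True then show ?thesis by (simp add: dapp_zero)
    next
      case False
      then obtain g where g: "dapp g v1 = 0" "dapp g y \<noteq> 0" using lemA[OF d1 False y] by blast
      have "is_vertex (y, g)" using g by (simp add: is_vertex_def)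
      moreover have "perp u (y, g)" using u y g by (simp add: perp_def)
      ultimately have "perp v (y, g)" using sn by blast
      then show ?thesis using v by (simp add: perp_def)
    qed
  qed
  have ann: "\<forall>g. dapp v1 g = 0 \<longrightarrow> dapp v2 g = 0"
  proof (intro allI impI)
    fix g assume g0: "dapp v1 g = 0"
    show "dapp v2 g = 0"
    proof (cases "g = 0")
      case True then show ?thesis by (simp add: dapp_def)
    next
      case False
      have d1': "dapp v1 f1 \<noteq> 0" using d1 by (simp add: dapp_comm)
      then obtain y where y: "dapp y f1 = 0" "dapp y g \<noteq> 0" using lemA[OF d1' False g0] by blast
      have "is_vertex (y, g)" using y by (simp add: is_vertex_def dapp_comm)
      moreover have "perp u (y, g)" using u y g0 by (simp add: perp_def dapp_comm)
      ultimately have "perp v (y, g)" using sn by blast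
      then show ?thesis using v by (simp add: perp_def dapp_comm)
    qed
  qed
  define b where "b = dapp f2 v1 / dapp f1 v1"
  define a where "a = dapp v2 f1 / dapp v1 f1"
  have f2: "f2 = b *s f1" using lemB[OF d1 ker] b_def by simp
  have v2: "v2 = a *s v1" using lemB[of v1 f1 v2] ann d1 a_def by (simp add: dapp_comm)
  have dd: "dapp f2 v2 = a * b * dapp f1 v1" by (simp add: f2 v2 dapp_smult)
  have ab: "a \<noteq> 0" "b \<noteq> 0" using d2 dd by auto
  have "phi c (wedge2 h f2) = psi (inverse c) (wedge2 h f2)" by (rule phi_eq[OF alt_wedge2 assms(2)])
  also have "\<dots> = (\<lambda>p. b * psi (inverse c) (wedge2 h f1) p)" by (simp add: f2 wedge2_smult_r psi_smult)
  also have "\<dots> = (\<lambda>p. b * phi c (wedge2 h f1) p)" by (simp add: phi_eq[OF alt_wedge2 assms(2)])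
  finally have ph: "phi c (wedge2 h f2) = (\<lambda>p. b * phi c (wedge2 h f1) p)" .
  show ?thesis
  proof
    fix r
    show "voltage c w u r = voltage c w v r"
      unfolding voltage_def u v w fst_conv snd_conv ph dd
      unfolding v2 wedge2_smult_r sprod_smult
      using ab d1 by (simp add: field_simps)
  qed
qed
end
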